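(* Let $H(x)=\cos x$ for $|x|\le\pi/2$ and $H(x)=0$ for $|x|\ge\pi/2$. Let $(\lambda_n)_{n\in\mathbb{Z}}$ be a strictly increasing sequence of real numbers satisfying $\lambda_{n+2}-\lambda_n\ge\pi$ for all $n\in\mathbb{Z}$. Then for every finitely supported sequence $(a_n)_{n\in\mathbb{Z}}$ of real numbers, the function $G(x)=\sum_n a_n H^2(x+\lambda_n)$ satisfies \[ \int_{-\infty}^{\infty}|G'(x)|^2\,dx\le 4\int_{-\infty}^{\infty}|G(x)|^2\,dx . \]
   Context: $H^2(x)=(H(x))^2$. *)

theory Defs
  imports "HOL-Analysis.Analysis"
begin

definition H :: "real \<Rightarrow> real" where
  "H x = (if \<bar>x\<bar> \<le> pi / 2 then cos x else 0)"

end

theory Submission imports Defs begin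


definition hh :: "real \<Rightarrow> real" where "hh y = (H y)\<^sup>2"
definition h1 :: "real \<Rightarrow> real" where "h1 y = (if \<bar>y\<bar> \<le> pi/2 then -(2 * sin y * cos y) else 0)"
definition chi :: "real \<Rightarrow> real" where "chi y = (if \<bar>y\<bar> < pi/2 then 1 else 0)"

lemma hh_zero: "\<not> \<bar>y\<bar> < pi/2 \<Longrightarrow> hh y = 0"
proof -
  assume a: "\<not> \<bar>y\<bar> < pi/2"
  show ?thesis
  proof (cases "\<bar>y\<bar> = pi/2")
    case True
    then have "y = pi/2 \<or> y = -(pi/2)" by linarith
    then show ?thesis by (elim disjE; hypsubst_thin; simp add: hh_def H_def)
  qed (use a in \<open>auto simp: hh_def H_def\<close>)
qed

lemma chi_hh: "chi y * hh y = hh y"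
  using hh_zero[of y] by (auto simp: chi_def)

lemma hh_even: "hh (-y) = hh y" by (simp add: hh_def H_def)
lemma chi_even: "chi (-y) = chi y" by (simp add: chi_def)

lemma hh_bnd: "0 \<le> hh y" "hh y \<le> 1"
  by (auto simp: hh_def H_def abs_square_le_1)

lemma chi_bnd: "0 \<le> chi y" "chi y \<le> 1" by (auto simp: chi_def)

lemma h1_bnd: "\<bar>h1 y\<bar> \<le> 2"
proof -
  have "\<bar>sin y * cos y\<bar> \<le> 1"
    by (simp add: abs_mult mult_le_one)
  then show ?thesis by (auto simp: h1_def abs_mult)
qed

lemma h1_cont: "continuous_on UNIV h1"
proof -
  have "continuous_on ({-(pi/2)..pi/2} \<union> ({..-(pi/2)} \<union> {pi/2..})) h1"
    unfolding h1_def
  proof (rule continuous_on_cases)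
    show "\<forall>x. x \<in> {- (pi / 2)..pi / 2} \<and> \<not> \<bar>x\<bar> \<le> pi / 2 \<or> x \<in> {..- (pi / 2)} \<union> {pi / 2..} \<and> \<bar>x\<bar> \<le> pi / 2 \<longrightarrow>
      - (2 * sin x * cos x) = 0"
    proof (intro allI impI)
      fix x :: real assume "x \<in> {- (pi / 2)..pi / 2} \<and> \<not> \<bar>x\<bar> \<le> pi / 2 \<or> x \<in> {..- (pi / 2)} \<union> {pi / 2..} \<and> \<bar>x\<bar> \<le> pi / 2"
      then have "x = pi/2 \<or> x = -(pi/2)" by auto
      then show "- (2 * sin x * cos x) = 0" by (elim disjE; hypsubst_thin; simp)
    qed
  qed (auto intro!: continuous_intros)
  moreover have "{-(pi/2)..pi/2} \<union> ({..-(pi/2)} \<union> {pi/2..}) = (UNIV::real set)" by auto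
  ultimately show ?thesis by simp
qed

lemma hh_deriv: "(hh has_real_derivative h1 y) (at y)"
proof -
  let ?S = "{-(pi/2)..pi/2::real}" and ?T = "- {-(pi/2)..pi/2::real}"
  have cT: "closure ?T = {..-(pi/2)} \<union> {pi/2..}"
    by (simp add: closure_complement interior_atLeastAtMost_real) (auto)
  have eq: "hh = (\<lambda>x. if x \<in> ?S then (cos x)^2 else 0)"
    by (auto simp: hh_def H_def fun_eq_iff abs_le_iff)
  have "((\<lambda>x. if x \<in> ?S then (cos x)^2 else 0) has_vector_derivative
      (if y \<in> ?S then -(2 * sin y * cos y) else 0)) (at y within UNIV)"
  proof (rule has_vector_derivative_If_within_closures[where f' = "\<lambda>y. -(2 * sin y * cos y)" and g' = "\<lambda>_. 0"])
    show "y \<in> ?S \<union> ?T" by auto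
    show "UNIV = ?S \<union> ?T" by auto
    show "((\<lambda>x. (cos x)\<^sup>2) has_vector_derivative - (2 * sin y * cos y)) (at y within ?S \<union> (closure ?S \<inter> closure ?T))"
      by (rule has_vector_derivative_at_within, subst has_real_derivative_iff_has_vector_derivative[symmetric])
         (auto intro!: derivative_eq_intros)
    show "((\<lambda>x. 0::real) has_vector_derivative 0) (at y within ?T \<union> (closure ?S \<inter> closure ?T))"
      by (rule has_vector_derivative_const)
    show "(cos y)\<^sup>2 = 0" if "y \<in> closure ?S" "y \<in> closure ?T"
    proof -
      from that cT have "y = pi/2 \<or> y = -(pi/2)" by auto
      then show ?thesis by (elim disjE; hypsubst_thin; simp)
    qed
    show "- (2 * sin y * cos y) = 0" if "y \<in> closure ?S" "y \<in> closure ?T"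
    proof -
      from that cT have "y = pi/2 \<or> y = -(pi/2)" by auto
      then show ?thesis by (elim disjE; hypsubst_thin; simp)
    qed
  qed
  moreover have "(if y \<in> ?S then -(2 * sin y * cos y) else 0) = h1 y"
    by (auto simp: h1_def abs_le_iff)
  ultimately show ?thesis
    by (simp add: eq has_real_derivative_iff_has_vector_derivative)
qed

lemma h1_deriv: "\<bar>y\<bar> \<noteq> pi/2 \<Longrightarrow> (h1 has_real_derivative chi y * (2 - 4 * hh y)) (at y)"
proof -
  assume ne: "\<bar>y\<bar> \<noteq> pi/2"
  show ?thesis
  proof (cases "\<bar>y\<bar> < pi/2")
    case True
    have d: "((\<lambda>x. -(2 * sin x * cos x)) has_real_derivative -(2*(cos y*cos y - sin y * sin y))) (at y)"
      by (auto intro!: derivative_eq_intros simp: algebra_simps)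
    have c1: "chi y = 1" using True by (simp add: chi_def)
    have c2: "hh y = cos y * cos y" using True by (simp add: hh_def H_def power2_eq_square)
    have "-(2*(cos y*cos y - sin y * sin y)) = chi y * (2 - 4 * hh y)"
      unfolding c1 c2 using sin_cos_squared_add3[of y] by (simp add: algebra_simps del: sin_cos_squared_add3)
    moreover have "(h1 has_real_derivative -(2*(cos y*cos y - sin y * sin y))) (at y)"
      by (rule has_field_derivative_transform_within_open[OF d, of "{-(pi/2)<..<pi/2}"])
         (use True in \<open>auto simp: h1_def\<close>)
    ultimately show ?thesis by simp
  next
    case False
    with ne have gt: "\<bar>y\<bar> > pi/2" by linarith
    have "(h1 has_real_derivative 0) (at y)"
      by (rule has_field_derivative_transform_within_open[OF DERIV_const, of "- {-(pi/2)..pi/2}"])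
         (use gt in \<open>auto simp: h1_def\<close>)
    then show ?thesis using False by (simp add: chi_def)
  qed
qed




lemma quad_form:
  fixes d :: "'i \<Rightarrow> 'i \<Rightarrow> real" and a :: "'i \<Rightarrow> real"
  assumes fin: "finite N" and sym: "\<And>n m. d n m = d m n"
    and nn: "\<And>n m. n \<noteq> m \<Longrightarrow> 0 \<le> d n m"
    and dom: "\<And>n. n \<in> N \<Longrightarrow> (\<Sum>m\<in>N-{n}. d n m) \<le> d n n"
  shows "0 \<le> (\<Sum>n\<in>N. \<Sum>m\<in>N. a n * a m * d n m)"
proof -
  define e where "e n m = (if n = m then 0 else d n m)" for n m
  have e_sym: "e n m = e m n" for n m using sym by (simp add: e_def)
  have e_sum: "(\<Sum>m\<in>N. e n m) = (\<Sum>m\<in>N-{n}. d n m)" if "n \<in> N" for n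
  proof -
    have "(\<Sum>m\<in>N. e n m) = (\<Sum>m\<in>N-{n}. e n m)"
      using fin that by (intro sum.mono_neutral_right) (auto simp: e_def)
    also have "\<dots> = (\<Sum>m\<in>N-{n}. d n m)" by (intro sum.cong) (auto simp: e_def)
    finally show ?thesis .
  qed
  have pw: "a n * a m * d n m \<ge> (if n = m then (a n)\<^sup>2 * d n n else 0) - ((a n)\<^sup>2 + (a m)\<^sup>2) / 2 * e n m" for n m
  proof (cases "n = m")
    case True then show ?thesis by (simp add: e_def power2_eq_square)
  next
    case False
    have "0 \<le> ((a n + a m)\<^sup>2 / 2) * d n m" using nn[OF False] by simp
    then show ?thesis using False by (simp add: e_def power2_eq_square field_simps)
  qed
  have L: "(\<Sum>n\<in>N. \<Sum>m\<in>N. a n * a m * d n m) \<ge>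
        (\<Sum>n\<in>N. \<Sum>m\<in>N. (if n = m then (a n)\<^sup>2 * d n n else 0) - ((a n)\<^sup>2 + (a m)\<^sup>2) / 2 * e n m)"
    by (intro sum_mono pw)
  have "(\<Sum>n\<in>N. \<Sum>m\<in>N. (if n = m then (a n)\<^sup>2 * d n n else 0) - ((a n)\<^sup>2 + (a m)\<^sup>2) / 2 * e n m)
      = (\<Sum>n\<in>N. (a n)\<^sup>2 * d n n) - (\<Sum>n\<in>N. \<Sum>m\<in>N. (a n)\<^sup>2 / 2 * e n m)
                 - (\<Sum>n\<in>N. \<Sum>m\<in>N. (a m)\<^sup>2 / 2 * e n m)"
    using fin by (simp add: sum_subtractf sum.distrib add_divide_distrib distrib_right sum.delta)
  also have "(\<Sum>n\<in>N. \<Sum>m\<in>N. (a m)\<^sup>2 / 2 * e n m) = (\<Sum>n\<in>N. \<Sum>m\<in>N. (a n)\<^sup>2 / 2 * e n m)"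
    by (subst sum.swap) (simp add: e_sym)
  also have "(\<Sum>n\<in>N. (a n)\<^sup>2 * d n n) - (\<Sum>n\<in>N. \<Sum>m\<in>N. (a n)\<^sup>2 / 2 * e n m)
                 - (\<Sum>n\<in>N. \<Sum>m\<in>N. (a n)\<^sup>2 / 2 * e n m)
           = (\<Sum>n\<in>N. (a n)\<^sup>2 * (d n n - (\<Sum>m\<in>N. e n m)))"
    by (simp add: sum_subtractf algebra_simps sum_distrib_left sum_distrib_right)
  also have "\<dots> \<ge> 0"
    by (intro sum_nonneg mult_nonneg_nonneg) (auto simp: e_sum dom)
  finally show ?thesis using L by linarith
qed




lemma hh_cont: "continuous_on UNIV hh"
  by (metis DERIV_isCont continuous_at_imp_continuous_on hh_deriv)

lemma shift_cont: "continuous_on UNIV (f::real\<Rightarrow>real) \<Longrightarrow> continuous_on UNIV (\<lambda>x. f (x + c))"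
  by (rule continuous_on_compose2[of UNIV f UNIV "\<lambda>x. x + c"]) (auto intro!: continuous_intros)

lemma chi_meas: "(\<lambda>x. chi (x + c)) \<in> borel_measurable borel"
  unfolding chi_def by measurable

lemma intg_bnd:
  fixes f :: "real \<Rightarrow> real"
  assumes "f \<in> borel_measurable borel" "\<And>x. \<bar>f x\<bar> \<le> C" "\<And>x. R \<le> \<bar>x\<bar> \<Longrightarrow> f x = 0"
  shows "integrable lborel f"
proof (rule Bochner_Integration.integrable_bound[where f="\<lambda>x. C * indicator {-R..R} x"])
  show "integrable lborel (\<lambda>x. C * indicator {-R..R} x)"
    using borel_integrable_atLeastAtMost[of "-R" R "\<lambda>_. C"] by simp
  show "f \<in> borel_measurable lborel" using assms(1) by simp
  have C: "0 \<le> C" using assms(2)[of 0] by linarith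
  show "AE x in lborel. norm (f x) \<le> norm (C * indicator {-R..R} x)"
  proof (rule AE_I2)
    fix x
    show "norm (f x) \<le> norm (C * indicator {-R..R} x)"
    proof (cases "x \<in> {-R..R}")
      case True then show ?thesis using assms(2)[of x] C by simp
    next
      case False
      then have "R \<le> \<bar>x\<bar>" by auto
      then show ?thesis using assms(3)[of x] by simp
    qed
  qed
qed

lemma sum_bnd:
  fixes f :: "real \<Rightarrow> real"
  assumes "\<And>y. \<bar>f y\<bar> \<le> c"
  shows "\<bar>\<Sum>n\<in>N. a n * f (x + lam n)\<bar> \<le> c * (\<Sum>n\<in>N. \<bar>a n\<bar>)"
proof -
  have "\<bar>\<Sum>n\<in>N. a n * f (x + lam n)\<bar> \<le> (\<Sum>n\<in>N. \<bar>a n * f (x + lam n)\<bar>)" by (rule sum_abs)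
  also have "\<dots> \<le> (\<Sum>n\<in>N. c * \<bar>a n\<bar>)"
    by (intro sum_mono) (metis abs_ge_zero abs_mult assms mult.commute mult_left_mono)
  finally show ?thesis by (simp add: sum_distrib_left)
qed

lemma close:
  fixes lam :: "int \<Rightarrow> real"
  assumes "strict_mono lam" "\<And>n. lam (n + 2) - lam n \<ge> pi" "\<bar>lam i - lam j\<bar> < pi"
  shows "\<bar>i - j\<bar> \<le> 1"
proof (rule ccontr)
  assume "\<not> \<bar>i - j\<bar> \<le> 1"
  then have "i + 2 \<le> j \<or> j + 2 \<le> i" by linarith
  then show False
  proof
    assume "i + 2 \<le> j"
    then have "lam (i+2) \<le> lam j" using assms(1) by (simp add: strict_mono_less_eq)
    then show False using assms(2)[of i] assms(3) by linarith
  next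
    assume "j + 2 \<le> i"
    then have "lam (j+2) \<le> lam i" using assms(1) by (simp add: strict_mono_less_eq)
    then show False using assms(2)[of j] assms(3) by linarith
  qed
qed




theorem mainTheorem3:
  fixes lam :: "int \<Rightarrow> real" and a :: "int \<Rightarrow> real" and G :: "real \<Rightarrow> real"
  assumes "strict_mono lam"
    and "\<And>n. lam (n + 2) - lam n \<ge> pi"
    and "finite {n. a n \<noteq> 0}"
    and "\<And>x. G x = (\<Sum>n\<in>{n. a n \<noteq> 0}. a n * (H (x + lam n))\<^sup>2)"
  shows "(LINT x|lborel. \<bar>deriv G x\<bar>\<^sup>2) \<le> 4 * (LINT x|lborel. \<bar>G x\<bar>\<^sup>2)"
proof -
  define N where "N = {n. a n \<noteq> 0}"
  have fin: "finite N" using assms(3) by (simp add: N_def)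
  have Gdef: "G = (\<lambda>x. \<Sum>n\<in>N. a n * hh (x + lam n))"
    using assms(4) by (auto simp: N_def hh_def)
  define S where "S = (\<Sum>n\<in>N. \<bar>a n\<bar>)"
  have S0: "0 \<le> S" by (simp add: S_def sum_nonneg)
  define R where "R = (\<Sum>n\<in>N. \<bar>lam n\<bar>) + 2"
  define G1 where "G1 x = (\<Sum>n\<in>N. a n * h1 (x + lam n))" for x
  define P where "P x = (\<Sum>n\<in>N. a n * chi (x + lam n))" for x
  define G2 where "G2 x = (\<Sum>n\<in>N. a n * (chi (x + lam n) * (2 - 4 * hh (x + lam n))))" for x
  have far: "pi/2 < \<bar>x + lam n\<bar>" if "n \<in> N" "R \<le> \<bar>x\<bar>" for x n
  proof -
    have "\<bar>lam n\<bar> \<le> (\<Sum>n\<in>N. \<bar>lam n\<bar>)" using fin that(1) by (intro member_le_sum) auto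
    then have "2 \<le> \<bar>x + lam n\<bar>" using that(2) unfolding R_def by linarith
    moreover have "pi/2 < 2" using pi_less_4 by linarith
    ultimately show ?thesis by linarith
  qed
  have supp_hh: "hh (x + lam n) = 0" "h1 (x + lam n) = 0" "chi (x + lam n) = 0"
    if "n \<in> N" "R \<le> \<bar>x\<bar>" for x n
    using far[OF that] hh_zero[of "x + lam n"] by (auto simp: h1_def chi_def)
  have G0: "G x = 0" "G1 x = 0" "P x = 0" if "R \<le> \<bar>x\<bar>" for x
    using supp_hh[OF _ that] by (auto simp: Gdef G1_def P_def)
  have G2_eq: "G2 x = 2 * P x - 4 * G x" for x
  proof -
    have "G2 x = (\<Sum>n\<in>N. 2 * (a n * chi (x + lam n)) - 4 * (a n * (chi (x + lam n) * hh (x + lam n))))"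
      unfolding G2_def by (intro sum.cong) (auto simp: algebra_simps)
    also have "\<dots> = 2 * P x - 4 * G x"
      by (simp add: chi_hh P_def Gdef sum_subtractf sum_distrib_left)
    finally show ?thesis .
  qed
  have dG: "(G has_real_derivative G1 x) (at x)" for x
    unfolding Gdef G1_def
  proof (rule DERIV_sum)
    fix n assume "n \<in> N"
    have "((\<lambda>x. hh (x + lam n)) has_real_derivative h1 (x + lam n) * 1) (at x)"
      by (rule DERIV_chain2[OF hh_deriv]) (auto intro!: derivative_eq_intros)
    then show "((\<lambda>x. a n * hh (x + lam n)) has_real_derivative a n * h1 (x + lam n)) (at x)"
      using DERIV_cmult by fastforce
  qed
  define E where "E = (\<lambda>n. pi/2 - lam n) ` N \<union> (\<lambda>n. -(pi/2) - lam n) ` N"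
  have finE: "finite E" using fin by (simp add: E_def)
  have dG1: "(G1 has_real_derivative G2 x) (at x)" if "x \<notin> E" for x
    unfolding G1_def G2_def
  proof (rule DERIV_sum)
    fix n assume n: "n \<in> N"
    have "\<bar>x + lam n\<bar> \<noteq> pi/2"
    proof
      assume "\<bar>x + lam n\<bar> = pi/2"
      then have "x = pi/2 - lam n \<or> x = -(pi/2) - lam n" by linarith
      then show False using that n by (auto simp: E_def)
    qed
    then have "((\<lambda>x. h1 (x + lam n)) has_real_derivative (chi (x + lam n) * (2 - 4 * hh (x + lam n))) * 1) (at x)"
      by (intro DERIV_chain2[OF h1_deriv]) (auto intro!: derivative_eq_intros)
    then show "((\<lambda>x. a n * h1 (x + lam n)) has_real_derivative a n * (chi (x + lam n) * (2 - 4 * hh (x + lam n)))) (at x)"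
      using DERIV_cmult by fastforce
  qed
  have cG: "continuous_on UNIV G"
    using dG by (metis DERIV_isCont continuous_at_imp_continuous_on)
  have cG1: "continuous_on UNIV G1"
    unfolding G1_def by (intro continuous_on_sum continuous_on_mult continuous_on_const shift_cont h1_cont)

  have mG: "G \<in> borel_measurable borel" using cG by (rule borel_measurable_continuous_onI)
  have mG1: "G1 \<in> borel_measurable borel" using cG1 by (rule borel_measurable_continuous_onI)
  have mP: "P \<in> borel_measurable borel"
    unfolding P_def by (intro borel_measurable_sum borel_measurable_times borel_measurable_const chi_meas)
  have bG: "\<bar>G x\<bar> \<le> S" for x
    using sum_bnd[where f=hh and c=1 and N=N and a=a and x=x and lam=lam] hh_bnd by (simp add: Gdef S_def)
  have bG1: "\<bar>G1 x\<bar> \<le> 2 * S" for x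
    using sum_bnd[where f=h1 and c=2 and N=N and a=a and x=x and lam=lam] h1_bnd by (simp add: G1_def S_def)
  have bP: "\<bar>P x\<bar> \<le> S" for x
    using sum_bnd[where f=chi and c=1 and N=N and a=a and x=x and lam=lam] chi_bnd by (simp add: P_def S_def abs_le_iff)
  have R0: "0 \<le> R" unfolding R_def by (simp add: sum_nonneg)
  define K where "K x = G x * G1 x" for x
  define F where "F x = G1 x * G1 x + G x * G2 x" for x
  have FTC: "(F has_integral (K R - K (-R))) {-R..R}"
  proof (rule fundamental_theorem_of_calculus_interior_strong[OF finE])
    show "-R \<le> R" using R0 by simp
    show "continuous_on {-R..R} K"
      unfolding K_def by (intro continuous_on_mult continuous_on_subset[OF cG] continuous_on_subset[OF cG1]) auto
    fix x assume "x \<in> {-R<..<R} - E"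
    then have "x \<notin> E" by auto
    have "(K has_real_derivative G1 x * G1 x + G2 x * G x) (at x)"
      unfolding K_def using DERIV_mult[OF dG dG1[OF \<open>x \<notin> E\<close>]] .
    then show "(K has_vector_derivative F x) (at x)"
      by (simp add: F_def has_real_derivative_iff_has_vector_derivative mult.commute)
  qed
  have KR: "K R = 0" "K (-R) = 0" using G0[of R] G0[of "-R"] R0 by (auto simp: K_def)
  have bF: "\<bar>F x\<bar> \<le> 2 * S * (2 * S) + S * (6 * S)" for x
  proof -
    have "\<bar>G2 x\<bar> \<le> 6 * S" using bP[of x] bG[of x] by (simp add: G2_eq)
    then have "\<bar>G x * G2 x\<bar> \<le> S * (6 * S)"
      unfolding abs_mult using bG[of x] S0 by (intro mult_mono) auto
    moreover have "\<bar>G1 x * G1 x\<bar> \<le> 2 * S * (2 * S)"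
      unfolding abs_mult using bG1[of x] S0 by (intro mult_mono) auto
    ultimately show ?thesis unfolding F_def by linarith
  qed
  have mF: "F \<in> borel_measurable borel"
    unfolding F_def G2_eq by (intro borel_measurable_add borel_measurable_times borel_measurable_diff
        borel_measurable_const mG mG1 mP)
  have intF: "integrable lborel F"
    by (rule intg_bnd[OF mF bF, of R]) (simp add: F_def G0 G2_eq)
  have "((\<lambda>x. if x \<in> {-R..R} then F x else 0) has_integral 0) UNIV"
    unfolding has_integral_restrict_UNIV using FTC KR by simp
  moreover have "(\<lambda>x. if x \<in> {-R..R} then F x else 0) = F"
  proof
    fix x show "(if x \<in> {-R..R} then F x else 0) = F x"
    proof (cases "x \<in> {-R..R}")
      case False then have "R \<le> \<bar>x\<bar>" by auto
      then show ?thesis using G0[of x] by (simp add: F_def)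
    qed simp
  qed
  ultimately have "(F has_integral 0) UNIV" by simp
  then have F0: "(LINT x|lborel. F x) = 0"
    using has_integral_unique[OF has_integral_integral_lborel[OF intF]] by simp

  have iG1: "integrable lborel (\<lambda>x. (G1 x)\<^sup>2)"
  proof (rule intg_bnd[where C="2 * S * (2 * S)" and R=R])
    show "(\<lambda>x. (G1 x)\<^sup>2) \<in> borel_measurable borel" using mG1 by measurable
    fix x show "\<bar>(G1 x)\<^sup>2\<bar> \<le> 2 * S * (2 * S)"
      unfolding power2_eq_square abs_mult using bG1[of x] S0 by (intro mult_mono) auto
  qed (simp add: G0)
  have iG: "integrable lborel (\<lambda>x. (G x)\<^sup>2)"
  proof (rule intg_bnd[where C="S * S" and R=R])
    show "(\<lambda>x. (G x)\<^sup>2) \<in> borel_measurable borel" using mG by measurable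
    fix x show "\<bar>(G x)\<^sup>2\<bar> \<le> S * S"
      unfolding power2_eq_square abs_mult using bG[of x] S0 by (intro mult_mono) auto
  qed (simp add: G0)
  have iPG: "integrable lborel (\<lambda>x. P x * G x)"
  proof (rule intg_bnd[where C="S * S" and R=R])
    show "(\<lambda>x. P x * G x) \<in> borel_measurable borel" using mG mP by measurable
    fix x show "\<bar>P x * G x\<bar> \<le> S * S"
      unfolding abs_mult using bG[of x] bP[of x] S0 by (intro mult_mono) auto
  qed (simp add: G0)
  have Feq: "F = (\<lambda>x. (G1 x)\<^sup>2 + 2 * (P x * G x) - 4 * (G x)\<^sup>2)"
    by (auto simp: F_def G2_eq fun_eq_iff power2_eq_square algebra_simps)
  have lin: "(LINT x|lborel. F x) = (LINT x|lborel. (G1 x)\<^sup>2) + 2 * (LINT x|lborel. P x * G x) - 4 * (LINT x|lborel. (G x)\<^sup>2)"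
    unfolding Feq using iG1 iG iPG by simp
  define d where "d n m = (LINT x|lborel. chi (x + lam n) * hh (x + lam m))" for n m
  have iD: "integrable lborel (\<lambda>x. chi (x + lam n) * hh (x + lam m))" if "m \<in> N" for n m
  proof (rule intg_bnd[where C=1 and R=R])
    show "(\<lambda>x. chi (x + lam n) * hh (x + lam m)) \<in> borel_measurable borel"
      by (intro borel_measurable_times chi_meas borel_measurable_continuous_onI shift_cont hh_cont)
    fix x show "\<bar>chi (x + lam n) * hh (x + lam m)\<bar> \<le> 1"
      using chi_bnd[of "x + lam n"] hh_bnd[of "x + lam m"] by (simp add: abs_mult mult_le_one)
  next
    fix x :: real assume "R \<le> \<bar>x\<bar>" then show "chi (x + lam n) * hh (x + lam m) = 0"
      using supp_hh[OF that] by simp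
  qed
  have PGexp: "(\<lambda>x. P x * G x) = (\<lambda>x. \<Sum>n\<in>N. \<Sum>m\<in>N. a n * a m * (chi (x + lam n) * hh (x + lam m)))"
    by (auto simp: fun_eq_iff P_def Gdef sum_product algebra_simps)
  have PGd: "(LINT x|lborel. P x * G x) = (\<Sum>n\<in>N. \<Sum>m\<in>N. a n * a m * d n m)"
  proof -
    have "(LINT x|lborel. P x * G x) = (\<Sum>n\<in>N. LINT x|lborel. (\<Sum>m\<in>N. a n * a m * (chi (x + lam n) * hh (x + lam m))))"
      unfolding PGexp by (intro Bochner_Integration.integral_sum Bochner_Integration.integrable_sum
          Bochner_Integration.integrable_mult_right iD)
    also have "\<dots> = (\<Sum>n\<in>N. \<Sum>m\<in>N. a n * a m * d n m)"
    proof (intro sum.cong refl)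
      fix n assume "n \<in> N"
      show "(LINT x|lborel. (\<Sum>m\<in>N. a n * a m * (chi (x + lam n) * hh (x + lam m)))) = (\<Sum>m\<in>N. a n * a m * d n m)"
        by (subst Bochner_Integration.integral_sum) (auto intro!: Bochner_Integration.integrable_mult_right iD simp: d_def)
    qed
    finally show ?thesis .
  qed
  have dsym: "d n m = d m n" for n m
  proof -
    have ar: "(-lam n - lam m) + -1 * x + lam n = -(x + lam m)" "(-lam n - lam m) + -1 * x + lam m = -(x + lam n)" for x
      by simp_all
    have "d n m = \<bar>-1::real\<bar> *\<^sub>R (LINT x|lborel. chi ((-lam n - lam m) + -1 * x + lam n) * hh ((-lam n - lam m) + -1 * x + lam m))"
      unfolding d_def by (rule lborel_integral_real_affine) simp
    also have "\<dots> = d m n"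
      unfolding ar chi_even hh_even d_def by (simp add: mult.commute)
    finally show ?thesis .
  qed
  have dnn: "0 \<le> d n m" for n m
    unfolding d_def by (rule Bochner_Integration.integral_nonneg) (simp add: chi_bnd hh_bnd)
  have pw: "0 \<le> hh (x + lam n) * (chi (x + lam n) - (\<Sum>m\<in>N-{n}. chi (x + lam m)))" for x n
  proof (cases "\<bar>x + lam n\<bar> < pi/2")
    case True
    define M where "M = {m \<in> N-{n}. \<bar>x + lam m\<bar> < pi/2}"
    have "(\<Sum>m\<in>N-{n}. chi (x + lam m)) = (\<Sum>m\<in>M. 1)"
      unfolding M_def using fin by (subst sum.inter_filter) (auto simp: chi_def)
    also have "\<dots> = real (card M)" by simp
    also have "card M \<le> Suc 0"
    proof (subst card_le_Suc0_iff_eq)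
      show "finite M" using fin by (simp add: M_def)
      show "\<forall>m1\<in>M. \<forall>m2\<in>M. m1 = m2"
      proof (intro ballI)
        fix m1 m2 assume m1: "m1 \<in> M" and m2: "m2 \<in> M"
        have x1: "\<bar>x + lam m1\<bar> < pi/2" "m1 \<noteq> n" using m1 by (auto simp: M_def)
        have x2: "\<bar>x + lam m2\<bar> < pi/2" "m2 \<noteq> n" using m2 by (auto simp: M_def)
        have c1: "\<bar>m1 - n\<bar> \<le> 1" by (rule close[OF assms(1,2)]) (use x1 True in arith)
        have c2: "\<bar>m2 - n\<bar> \<le> 1" by (rule close[OF assms(1,2)]) (use x2 True in arith)
        have c3: "\<bar>m1 - m2\<bar> \<le> 1" by (rule close[OF assms(1,2)]) (use x1 x2 in arith)
        show "m1 = m2" using c1 c2 c3 x1(2) x2(2) by arith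
      qed
    qed
    finally have "(\<Sum>m\<in>N-{n}. chi (x + lam m)) \<le> 1" by simp
    then show ?thesis using True hh_bnd[of "x + lam n"] by (simp add: chi_def)
  next
    case False then show ?thesis using hh_zero by simp
  qed
  have dom: "(\<Sum>m\<in>N-{n}. d n m) \<le> d n n" if "n \<in> N" for n
  proof -
    have "d n n - (\<Sum>m\<in>N-{n}. d n m) = d n n - (\<Sum>m\<in>N-{n}. d m n)" using dsym by simp
    also have "\<dots> = (LINT x|lborel. chi (x + lam n) * hh (x + lam n) - (\<Sum>m\<in>N-{n}. chi (x + lam m) * hh (x + lam n)))"
    proof -
      have "(\<Sum>m\<in>N-{n}. d m n) = (LINT x|lborel. (\<Sum>m\<in>N-{n}. chi (x + lam m) * hh (x + lam n)))"
        unfolding d_def by (rule Bochner_Integration.integral_sum[symmetric]) (auto intro: iD that)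
      then show ?thesis
        unfolding d_def using that
        by (subst Bochner_Integration.integral_diff) (auto intro!: iD Bochner_Integration.integrable_sum)
    qed
    also have "\<dots> = (LINT x|lborel. hh (x + lam n) * (chi (x + lam n) - (\<Sum>m\<in>N-{n}. chi (x + lam m))))"
      by (simp add: algebra_simps sum_distrib_left)
    also have "\<dots> \<ge> 0" by (rule Bochner_Integration.integral_nonneg) (rule pw)
    finally show ?thesis by simp
  qed
  have PG0: "0 \<le> (LINT x|lborel. P x * G x)"
    unfolding PGd by (rule quad_form[OF fin dsym dnn dom])
  have dGe: "deriv G x = G1 x" for x using dG by (rule DERIV_imp_deriv)
  show ?thesis
    using F0 lin PG0 by (simp add: dGe)
qed


end
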